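(* ${\bf Forb}(\Gamma_{\leq 1})=\{P_3\}$, where $P_3$ is the path on three vertices.
   Context: For a finite graph $G$ and indeterminates $X_G=\{x_u : u\in V(G)\}$, the generalized Laplacian matrix $L(G,X_G)$ is the $V(G)\times V(G)$ matrix over $\mathbb{Z}[X_G]$ with $(u,u)$-entry $x_u$ and $(u,v)$-entry $-m_{uv}$ for $u\ne v$, $m_{uv}$ being the number of edges between $u$ and $v$. The $i$-th critical ideal $I_i(G,X_G)$ is the ideal of $\mathbb{Z}[X_G]$ generated by all $i\times i$ minors of $L(G,X_G)$ (with $I_i=\langle1\rangle$ for $i<1$, $I_i=\langle 0\rangle$ for $i>|V(G)|$). The algebraic co-rank $\gamma(G)$ is the number of critical ideals of $G$ equal to $\langle 1\rangle$. $\Gamma_{\le k}$ is the set of simple connected graphs $G$ with $\gamma(G)\le k$. A graph $G$ is forbidden for $\Gamma_{\le k}$ if $\gamma(G)\ge k+1$; ${\bf Forb}(\Gamma_{\le k})$ is the set of minimal (with respect to taking induced subgraphs) simple connected forbidden graphs for $\Gamma_{\le k}$; equivalently, the simple connected graphs $G$ with $\gamma(G)=k+1$ such that $\gamma(G\setminus v)<\gamma(G)$ for every vertex $v$ of $G$. *)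

theory Defs
  imports "HOL-Library.Poly_Mapping" "Jordan_Normal_Form.Determinant"
begin

text \<open>Multivariate integer polynomials in indeterminates indexed by 'a:
  monomials are finitely supported exponent maps 'a \<Rightarrow>0 nat.\<close>
type_synonym 'a mpoly_int = "('a \<Rightarrow>\<^sub>0 nat) \<Rightarrow>\<^sub>0 int"

definition var :: "'a \<Rightarrow> 'a mpoly_int" where
  "var u = Poly_Mapping.single (Poly_Mapping.single u 1) 1"

definition simple_graph :: "'a set \<Rightarrow> ('a \<Rightarrow> 'a \<Rightarrow> bool) \<Rightarrow> bool" where
  "simple_graph V E \<longleftrightarrow> finite V \<and>
     (\<forall>u v. E u v \<longrightarrow> u \<in> V \<and> v \<in> V \<and> u \<noteq> v \<and> E v u)"

definition connected_graph :: "'a set \<Rightarrow> ('a \<Rightarrow> 'a \<Rightarrow> bool) \<Rightarrow> bool" where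
  "connected_graph V E \<longleftrightarrow> V \<noteq> {} \<and> (\<forall>u\<in>V. \<forall>v\<in>V. E\<^sup>*\<^sup>* u v)"

definition induced :: "('a \<Rightarrow> 'a \<Rightarrow> bool) \<Rightarrow> 'a set \<Rightarrow> 'a \<Rightarrow> 'a \<Rightarrow> bool" where
  "induced E W = (\<lambda>u v. E u v \<and> u \<in> W \<and> v \<in> W)"

text \<open>Generalized Laplacian L(G,X_G) (simple graph, so m_uv \<in> {0,1}).\<close>
definition gen_laplacian :: "('a \<Rightarrow> 'a \<Rightarrow> bool) \<Rightarrow> 'a \<Rightarrow> 'a \<Rightarrow> 'a mpoly_int" where
  "gen_laplacian E u v = (if u = v then var u else - (if E u v then 1 else 0))"

text \<open>All i \<times> i minors: determinants of the submatrix with rows rs and columns cs,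
  rs, cs distinct lists of i vertices (all orderings, so signs are irrelevant).\<close>
definition minors :: "'a set \<Rightarrow> ('a \<Rightarrow> 'a \<Rightarrow> bool) \<Rightarrow> nat \<Rightarrow> 'a mpoly_int set" where
  "minors V E i = {det (mat i i (\<lambda>(a, b). gen_laplacian E (rs ! a) (cs ! b))) | rs cs.
      distinct rs \<and> distinct cs \<and> length rs = i \<and> length cs = i \<and> set rs \<subseteq> V \<and> set cs \<subseteq> V}"

definition gen_ideal :: "'r::comm_ring_1 set \<Rightarrow> 'r set" where
  "gen_ideal S = {x. \<exists>F c. finite F \<and> F \<subseteq> S \<and> x = (\<Sum>s\<in>F. c s * s)}"

definition critical_ideal :: "'a set \<Rightarrow> ('a \<Rightarrow> 'a \<Rightarrow> bool) \<Rightarrow> nat \<Rightarrow> 'a mpoly_int set" where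
  "critical_ideal V E i = gen_ideal (minors V E i)"

definition alg_corank :: "'a set \<Rightarrow> ('a \<Rightarrow> 'a \<Rightarrow> bool) \<Rightarrow> nat" where
  "alg_corank V E = card {i. 1 \<le> i \<and> i \<le> card V \<and> critical_ideal V E i = UNIV}"

definition forb :: "nat \<Rightarrow> 'a set \<Rightarrow> ('a \<Rightarrow> 'a \<Rightarrow> bool) \<Rightarrow> bool" where
  "forb k V E \<longleftrightarrow> simple_graph V E \<and> connected_graph V E \<and> alg_corank V E \<ge> k + 1 \<and>
     (\<forall>W. W \<subset> V \<and> connected_graph W (induced E W) \<longrightarrow> alg_corank W (induced E W) \<le> k)"

definition P3_edge :: "nat \<Rightarrow> nat \<Rightarrow> bool" where
  "P3_edge a b \<longleftrightarrow> {a, b} = {0, 1} \<or> {a, b} = {1, 2}"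

definition graph_iso :: "'a set \<Rightarrow> ('a \<Rightarrow> 'a \<Rightarrow> bool) \<Rightarrow> 'b set \<Rightarrow> ('b \<Rightarrow> 'b \<Rightarrow> bool) \<Rightarrow> bool" where
  "graph_iso V E W F \<longleftrightarrow> (\<exists>f. bij_betw f V W \<and> (\<forall>u\<in>V. \<forall>v\<in>V. E u v \<longleftrightarrow> F (f u) (f v)))"

end

theory Submission imports Defs begin

definition deg :: "('a \<Rightarrow>\<^sub>0 nat) \<Rightarrow> nat" where
  "deg m = (\<Sum>k\<in>Poly_Mapping.keys m. Poly_Mapping.lookup m k)"

lemma deg_sup: "finite K \<Longrightarrow> Poly_Mapping.keys m \<subseteq> K \<Longrightarrow> deg m = (\<Sum>k\<in>K. Poly_Mapping.lookup m k)"
  unfolding deg_def by (rule sum.mono_neutral_left) (auto simp: in_keys_iff)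

lemma deg_add: "deg (m + n) = deg m + deg n"
proof -
  let ?K = "Poly_Mapping.keys m \<union> Poly_Mapping.keys n"
  have "deg (m+n) = (\<Sum>k\<in>?K. Poly_Mapping.lookup (m+n) k)"
    by (rule deg_sup) (use keys_add[of m n] in auto)
  also have "\<dots> = deg m + deg n"
    by (simp add: lookup_add sum.distrib deg_sup[of ?K])
  finally show ?thesis .
qed

definition ev :: "'a mpoly_int \<Rightarrow> int" where
  "ev p = (\<Sum>m\<in>Poly_Mapping.keys p. Poly_Mapping.lookup p m * (-1)^deg m)"

lemma ev_sup: "finite K \<Longrightarrow> Poly_Mapping.keys p \<subseteq> K \<Longrightarrow> ev p = (\<Sum>m\<in>K. Poly_Mapping.lookup p m * (-1)^deg m)"
  unfolding ev_def by (rule sum.mono_neutral_left) (auto simp: in_keys_iff)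

lemma ev_diff: "ev (p - q) = ev p - ev q"
proof -
  let ?K = "Poly_Mapping.keys p \<union> Poly_Mapping.keys q"
  have "ev (p-q) = (\<Sum>m\<in>?K. Poly_Mapping.lookup (p-q) m * (-1)^deg m)"
    by (rule ev_sup) (use keys_diff[of p q] in auto)
  also have "\<dots> = ev p - ev q"
    by (simp add: lookup_minus left_diff_distrib sum_subtractf ev_sup[of ?K])
  finally show ?thesis .
qed

lemma ev_add: "ev (p + q) = ev p + ev q"
proof -
  let ?K = "Poly_Mapping.keys p \<union> Poly_Mapping.keys q"
  have "ev (p+q) = (\<Sum>m\<in>?K. Poly_Mapping.lookup (p+q) m * (-1)^deg m)"
    by (rule ev_sup) (use keys_add[of p q] in auto)
  also have "\<dots> = ev p + ev q"
    by (simp add: lookup_add distrib_right sum.distrib ev_sup[of ?K])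
  finally show ?thesis .
qed

lemma ev_single: "ev (Poly_Mapping.single m c) = c * (-1)^deg m"
  by (subst ev_sup[of "{m}"]) auto

lemma ev_zero: "ev 0 = 0" unfolding ev_def by simp

lemma ev_mult: "ev (p * q) = ev p * ev q"
using subset_UNIV[of "Poly_Mapping.keys p"]
proof (induction p rule: frag_induction)
  case zero show ?case by (simp add: ev_zero)
next
  case (one x)
  show ?case
    using subset_UNIV[of "Poly_Mapping.keys q"]
  proof (induction q rule: frag_induction)
    case zero show ?case by (simp add: ev_zero)
  next
    case (one y)
    show ?case by (simp add: mult_single ev_single deg_add power_add)
  next
    case (diff a b)
    then show ?case by (simp add: right_diff_distrib ev_diff)
  qed
next
  case (diff a b)
  then show ?case by (simp add: left_diff_distrib ev_diff)
qed

lemma ev_one: "ev 1 = 1"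
proof -
  have "(1::'a mpoly_int) = Poly_Mapping.single 0 1" by simp
  then show ?thesis by (metis ev_single deg_def keys_zero sum.empty power_0 mult_1)
qed

interpretation ev: comm_ring_hom ev
  by unfold_locales (auto simp: ev_one ev_add ev_mult ev_zero)

lemma ev_var: "ev (var u) = -1"
  unfolding var_def by (simp add: ev_single deg_def)



lemma minor_ev_zero:
  assumes i: "2 \<le> i" and cmp: "\<forall>u\<in>W. \<forall>v\<in>W. u \<noteq> v \<longrightarrow> F u v"
    and s: "s \<in> minors W F i"
  shows "ev s = 0"
proof -
  obtain rs cs where s_def: "s = det (mat i i (\<lambda>(a, b). gen_laplacian F (rs ! a) (cs ! b)))"
    and d: "distinct rs" "distinct cs" "length rs = i" "length cs = i" "set rs \<subseteq> W" "set cs \<subseteq> W"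
    using s unfolding minors_def by blast
  let ?M = "mat i i (\<lambda>(a, b). gen_laplacian F (rs ! a) (cs ! b))"
  have "map_mat ev ?M = mat i i (\<lambda>_. -1)"
  proof (rule eq_matI)
    fix a b assume ab: "a < dim_row (mat i i (\<lambda>_. -1::int))" "b < dim_col (mat i i (\<lambda>_. -1::int))"
    then have "rs ! a \<in> W" "cs ! b \<in> W" using d by (auto simp: set_conv_nth)
    then show "map_mat ev ?M $$ (a, b) = mat i i (\<lambda>_. -1) $$ (a, b)"
      using ab cmp by (auto simp: gen_laplacian_def ev_var ev.hom_uminus ev_zero)
  qed auto
  then have "ev s = det (mat i i (\<lambda>_. -1::int))"
    unfolding s_def by (metis ev.hom_det)
  also have "\<dots> = 0"
  proof (rule det_identical_rows[of _ i 0 1])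
    show "row (mat i i (\<lambda>_. -1::int)) 0 = row (mat i i (\<lambda>_. -1)) 1"
      using i by (auto intro!: eq_vecI)
  qed (use i in auto)
  finally show ?thesis .
qed

lemma gen_ideal_ev:
  assumes "\<forall>s\<in>S. ev s = 0" and "x \<in> gen_ideal S" shows "ev x = 0"
proof -
  obtain G c where "finite G" "G \<subseteq> S" "x = (\<Sum>s\<in>G. c s * s)"
    using assms(2) unfolding gen_ideal_def by blast
  then show ?thesis using assms(1) by (auto simp: ev.hom_sum ev.hom_mult intro!: sum.neutral)
qed

lemma complete_corank:
  assumes "\<forall>u\<in>W. \<forall>v\<in>W. u \<noteq> v \<longrightarrow> F u v"
  shows "alg_corank W F \<le> 1"
proof -
  have "{i. 1 \<le> i \<and> i \<le> card W \<and> critical_ideal W F i = UNIV} \<subseteq> {1}"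
  proof
    fix i assume "i \<in> {i. 1 \<le> i \<and> i \<le> card W \<and> critical_ideal W F i = UNIV}"
    then have i1: "1 \<le> i" and U: "critical_ideal W F i = UNIV" by auto
    show "i \<in> {1}"
    proof (rule ccontr)
      assume "i \<notin> {1}"
      then have "2 \<le> i" using i1 by auto
      then have "\<forall>s\<in>minors W F i. ev s = 0" using minor_ev_zero assms by blast
      moreover have "1 \<in> gen_ideal (minors W F i)" using U unfolding critical_ideal_def by auto
      ultimately show False using gen_ideal_ev ev_one by force
    qed
  qed
  then have "alg_corank W F \<le> card {1::nat}"
    unfolding alg_corank_def by (rule card_mono[rotated]) simp
  then show ?thesis by simp
qed

lemma gen_ideal_unit:
  assumes "s \<in> S" "t * s = (1::'r::comm_ring_1)" shows "gen_ideal S = UNIV"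
proof -
  have "x \<in> gen_ideal S" for x
    unfolding gen_ideal_def
    by (rule CollectI, rule exI[of _ "{s}"], rule exI[of _ "\<lambda>_. x * t"]) (use assms in \<open>auto simp: mult.assoc\<close>)
  then show ?thesis by auto
qed

lemma p3_corank:
  assumes dist: "a \<noteq> b" "b \<noteq> c" "a \<noteq> c" and e: "F a b" "F b c" "\<not> F a c"
    and W: "W = {a, b, c}"
  shows "2 \<le> alg_corank W F"
proof -
  have I1: "critical_ideal W F 1 = UNIV"
  proof -
    let ?M = "mat 1 1 (\<lambda>(x, y). gen_laplacian F ([a] ! x) ([b] ! y))"
    have "det ?M = prod_list (diag_mat ?M)"
      by (rule det_lower_triangular[of 1]) auto
    also have "\<dots> = -1" using e dist by (simp add: diag_mat_def gen_laplacian_def)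
    finally have "det ?M = -1" .
    moreover have "det ?M \<in> minors W F 1" unfolding minors_def using W dist by force
    ultimately have "-1 \<in> minors W F 1" by simp
    then show ?thesis unfolding critical_ideal_def by (rule gen_ideal_unit[of _ _ "-1"]) simp
  qed
  have I2: "critical_ideal W F 2 = UNIV"
  proof -
    let ?M = "mat 2 2 (\<lambda>(x, y). gen_laplacian F ([a, b] ! x) ([b, c] ! y))"
    have "det ?M = prod_list (diag_mat ?M)"
    proof (rule det_lower_triangular[of 2])
      fix i j :: nat assume "i < j" "j < 2"
      then have "i = 0" "j = 1" by auto
      then show "?M $$ (i, j) = 0" using e dist by (simp add: gen_laplacian_def)
    qed auto
    also have "\<dots> = 1" using e dist
      by (simp add: diag_mat_def gen_laplacian_def upt_conv_Cons)
    finally have "det ?M = 1" .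
    moreover have "det ?M \<in> minors W F 2" unfolding minors_def using W dist by force
    ultimately have "1 \<in> minors W F 2" by simp
    then show ?thesis unfolding critical_ideal_def by (rule gen_ideal_unit[of _ _ 1]) simp
  qed
  have cW: "card W = 3" using W dist by simp
  have "{1, 2} \<subseteq> {i. 1 \<le> i \<and> i \<le> card W \<and> critical_ideal W F i = UNIV}"
    using I1 I2 cW by auto
  then have "card {1::nat, 2} \<le> alg_corank W F"
    unfolding alg_corank_def by (rule card_mono[rotated]) auto
  then show ?thesis by simp
qed


lemma find_P3_aux:
  assumes sg: "simple_graph V E" and path: "E\<^sup>*\<^sup>* u v" and u: "u \<in> V"
  shows "v = u \<or> E u v \<or> (\<exists>a b c. a \<noteq> b \<and> b \<noteq> c \<and> a \<noteq> c \<and> E a b \<and> E b c \<and> \<not> E a c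
           \<and> a \<in> V \<and> b \<in> V \<and> c \<in> V)"
  using path
proof (induction rule: rtranclp_induct)
  case base then show ?case by simp
next
  case (step w v)
  from step.IH show ?case
  proof (elim disjE)
    assume "w = u" then show ?thesis using step.hyps(2) by simp
  next
    assume uw: "E u w"
    show ?thesis
    proof (cases "v = u \<or> E u v")
      case True then show ?thesis by blast
    next
      case False
      have "u \<noteq> w" "w \<noteq> v" "u \<in> V" "w \<in> V" "v \<in> V"
        using sg uw step.hyps(2) unfolding simple_graph_def by blast+
      then show ?thesis using False uw step.hyps(2) by blast
    qed
  qed blast
qed

lemma find_P3:
  assumes sg: "simple_graph V E" and cg: "connected_graph V E"
    and nc: "\<not> (\<forall>u\<in>V. \<forall>v\<in>V. u \<noteq> v \<longrightarrow> E u v)"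
  shows "\<exists>a b c. a \<noteq> b \<and> b \<noteq> c \<and> a \<noteq> c \<and> E a b \<and> E b c \<and> \<not> E a c
           \<and> a \<in> V \<and> b \<in> V \<and> c \<in> V"
proof -
  obtain u v where "u \<in> V" "v \<in> V" "u \<noteq> v" "\<not> E u v" using nc by blast
  moreover have "E\<^sup>*\<^sup>* u v" using cg \<open>u \<in> V\<close> \<open>v \<in> V\<close> unfolding connected_graph_def by blast
  ultimately show ?thesis using find_P3_aux[OF sg] by blast
qed

lemma p3_connected:
  assumes "F a b" "F b a" "F b c" "F c b"
  shows "connected_graph {a, b, c} F"
proof -
  have ab: "F\<^sup>*\<^sup>* a b" "F\<^sup>*\<^sup>* b a" "F\<^sup>*\<^sup>* b c" "F\<^sup>*\<^sup>* c b" using assms by auto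
  have "F\<^sup>*\<^sup>* a c" "F\<^sup>*\<^sup>* c a" using ab by (meson rtranclp_trans)+
  then show ?thesis using ab unfolding connected_graph_def by auto
qed

lemma no_path:
  assumes sg: "simple_graph V E" and W: "W \<subseteq> {a, c}" and nac: "\<not> E a c"
    and p: "(induced E W)\<^sup>*\<^sup>* a y"
  shows "y = a"
  using p
proof (induction rule: rtranclp_induct)
  case (step y z)
  then have "E a z" "z \<in> W" unfolding induced_def by auto
  moreover have "a \<noteq> z" using \<open>E a z\<close> sg unfolding simple_graph_def by blast
  ultimately show ?case using W nac by auto
qed simp

theorem corollary3p5:
  fixes V :: "'a set" and E :: "'a \<Rightarrow> 'a \<Rightarrow> bool"
  shows "forb 1 V E \<longleftrightarrow> simple_graph V E \<and> graph_iso V E {0::nat, 1, 2} P3_edge"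
proof
  assume fb: "forb 1 V E"
  then have sg: "simple_graph V E" and cg: "connected_graph V E" and cr: "2 \<le> alg_corank V E"
    and mn: "\<And>W. W \<subset> V \<Longrightarrow> connected_graph W (induced E W) \<Longrightarrow> alg_corank W (induced E W) \<le> 1"
    unfolding forb_def by auto
  have sym: "\<And>u v. E u v \<Longrightarrow> E v u" and irr: "\<And>u. \<not> E u u"
    using sg unfolding simple_graph_def by blast+
  have "\<not> (\<forall>u\<in>V. \<forall>v\<in>V. u \<noteq> v \<longrightarrow> E u v)"
    using complete_corank[of V E] cr by auto
  then obtain a b c where d: "a \<noteq> b" "b \<noteq> c" "a \<noteq> c" and e: "E a b" "E b c" "\<not> E a c"
    and inV: "a \<in> V" "b \<in> V" "c \<in> V"
    using find_P3[OF sg cg] by blast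
  let ?W = "{a, b, c}"
  have VW: "V = ?W"
  proof (rule ccontr)
    assume "V \<noteq> ?W"
    then have sub: "?W \<subset> V" using inV by auto
    have "connected_graph ?W (induced E ?W)"
      by (rule p3_connected) (use e sym in \<open>auto simp: induced_def\<close>)
    then have "alg_corank ?W (induced E ?W) \<le> 1" using mn sub by blast
    moreover have "2 \<le> alg_corank ?W (induced E ?W)"
      by (rule p3_corank[OF d]) (use e in \<open>auto simp: induced_def\<close>)
    ultimately show False by simp
  qed
  define f where "f x = (if x = a then 0 else if x = b then 1 else (2::nat))" for x
  have "bij_betw f V {0, 1, 2}"
    unfolding VW bij_betw_def inj_on_def f_def using d by auto
  moreover have "\<forall>u\<in>V. \<forall>v\<in>V. E u v \<longleftrightarrow> P3_edge (f u) (f v)"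
    unfolding VW f_def P3_edge_def using d e sym irr by (auto simp: doubleton_eq_iff)
  ultimately show "simple_graph V E \<and> graph_iso V E {0::nat, 1, 2} P3_edge"
    using sg unfolding graph_iso_def by blast
next
  assume "simple_graph V E \<and> graph_iso V E {0::nat, 1, 2} P3_edge"
  then have sg: "simple_graph V E" and "graph_iso V E {0::nat, 1, 2} P3_edge" by auto
  then obtain f where bij: "bij_betw f V {0::nat, 1, 2}"
    and ed: "\<forall>u\<in>V. \<forall>v\<in>V. E u v \<longleftrightarrow> P3_edge (f u) (f v)"
    unfolding graph_iso_def by blast
  have sym: "\<And>u v. E u v \<Longrightarrow> E v u" and irr: "\<And>u. \<not> E u u"
    using sg unfolding simple_graph_def by blast+
  define g where "g = inv_into V f"
  have gb: "bij_betw g {0::nat, 1, 2} V" unfolding g_def by (rule bij_betw_inv_into[OF bij])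
  define a where "a = g 0"
  define b where "b = g 1"
  define c where "c = g 2"
  have fg: "f (g x) = x" if "x \<in> {0::nat, 1, 2}" for x
    unfolding g_def using bij that by (simp add: bij_betw_def f_inv_into_f)
  have VW: "V = {a, b, c}" using bij_betw_imp_surj_on[OF gb] unfolding a_def b_def c_def by auto
  have inV: "a \<in> V" "b \<in> V" "c \<in> V" using VW by auto
  have fa: "f a = 0" "f b = 1" "f c = 2" unfolding a_def b_def c_def using fg by auto
  have d: "a \<noteq> b" "b \<noteq> c" "a \<noteq> c" using fa by (metis zero_neq_one numeral_One numeral_eq_iff semiring_norm(85) zero_neq_numeral)+
  have e: "E a b" "E b c" "\<not> E a c" "E b a" "E c b" "\<not> E c a"
    using ed inV fa by (auto simp: P3_edge_def doubleton_eq_iff)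
  have cg: "connected_graph V E" unfolding VW by (rule p3_connected) (use e in auto)
  have cr: "2 \<le> alg_corank V E" by (rule p3_corank[OF d]) (use e VW in auto)
  have mn: "alg_corank W (induced E W) \<le> 1" if sub: "W \<subset> V" and cW: "connected_graph W (induced E W)" for W
  proof (rule complete_corank, intro ballI impI)
    fix u v assume uv: "u \<in> W" "v \<in> W" "u \<noteq> v"
    show "induced E W u v"
    proof (rule ccontr)
      assume ne: "\<not> induced E W u v"
      then have "\<not> E u v" using uv unfolding induced_def by auto
      moreover have "u \<in> V" "v \<in> V" using uv sub by auto
      ultimately have uvac: "(u = a \<and> v = c) \<or> (u = c \<and> v = a)"
        using VW uv(3) e by auto
      then have "a \<in> W" "c \<in> W" using uv by auto
      have "b \<notin> W"
      proof
        assume "b \<in> W"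
        then have "V \<subseteq> W" using VW \<open>a \<in> W\<close> \<open>c \<in> W\<close> by auto
        then show False using sub by auto
      qed
      then have Wac: "W \<subseteq> {a, c}" using sub VW by auto
      have "(induced E W)\<^sup>*\<^sup>* a c" using cW \<open>a \<in> W\<close> \<open>c \<in> W\<close> unfolding connected_graph_def by blast
      then have "c = a" using no_path[OF sg Wac] e by blast
      then show False using d by simp
    qed
  qed
  show "forb 1 V E" unfolding forb_def using sg cg cr mn by auto
qed

end
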